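(* Let $\mathcal{E}$ and $\mathcal{F}$ be fusion systems over finite $p$-groups $R$ and $S$, at least one of them saturated, and let $\phi:S\to R$ be a group isomorphism inducing an isomorphism of fusion systems $\mathcal{F}\to\mathcal{E}$. If $Q$ is a fully $\mathcal{F}$-normalized subgroup of $S$ and $P=\phi(Q)$, then $\Delta(P,\phi,Q)=\{(\phi(y),y):y\in Q\}$ is a fully $\mathcal{E}\times\mathcal{F}$-normalized subgroup of $R\times S$.
   Context: $\phi$ induces an isomorphism $\mathcal{F}\to\mathcal{E}$ if $\mathrm{Hom}_\mathcal{E}(\phi(P_1),\phi(P_2))=\phi\circ\mathrm{Hom}_\mathcal{F}(P_1,P_2)\circ\phi^{-1}$ for all $P_1,P_2\le S$. $\mathcal{E}\times\mathcal{F}$ is the fusion system over $R\times S$ in which, for $U,V\le R\times S$, $\mathrm{Hom}_{\mathcal{E}\times\mathcal{F}}(U,V)$ consists of the homomorphisms $U\to V$ of the form $(\psi_1,\psi_2)|_U$ with $\psi_1\in\mathrm{Hom}_\mathcal{E}(p_1(U),p_1(V))$, $\psi_2\in\mathrm{Hom}_\mathcal{F}(p_2(U),p_2(V))$ ($p_i$ the projections). A subgroup is fully normalized in a fusion system if its normalizer has maximal order among all subgroups isomorphic to it in the fusion system. *)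

theory Defs
  imports "HOL-Algebra.Algebra" "HOL-Library.FuncSet"
begin

text \<open>Fusion systems over a group G (with carrier type 'a) are represented by their
  morphism sets: F P Q is the set Hom_F(P,Q) for subgroups P, Q of G.
  Morphisms are functions restricted to their domain (extensional, value
  undefined outside the domain), so that equality of morphisms is equality
  of functions on the domain.\<close>

type_synonym 'a fusion = "'a set \<Rightarrow> 'a set \<Rightarrow> ('a \<Rightarrow> 'a) set"

definition p_group :: "nat \<Rightarrow> ('a, 'm) monoid_scheme \<Rightarrow> bool" where
  "p_group p G \<longleftrightarrow> group G \<and> Factorial_Ring.prime p \<and> finite (carrier G)
     \<and> (\<exists>n. card (carrier G) = p ^ n)"

definition conj_map :: "('a, 'm) monoid_scheme \<Rightarrow> 'a \<Rightarrow> 'a set \<Rightarrow> ('a \<Rightarrow> 'a)" where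
  "conj_map G g P = (\<lambda>x\<in>P. g \<otimes>\<^bsub>G\<^esub> x \<otimes>\<^bsub>G\<^esub> inv\<^bsub>G\<^esub> g)"

definition Hom_grp :: "('a, 'm) monoid_scheme \<Rightarrow> 'a set \<Rightarrow> 'a set \<Rightarrow> ('a \<Rightarrow> 'a) set" where
  "Hom_grp G P Q = {conj_map G g P | g. g \<in> carrier G \<and>
      (\<lambda>x. g \<otimes>\<^bsub>G\<^esub> x \<otimes>\<^bsub>G\<^esub> inv\<^bsub>G\<^esub> g) ` P \<subseteq> Q}"

definition Inj_hom :: "('a, 'm) monoid_scheme \<Rightarrow> 'a set \<Rightarrow> 'a set \<Rightarrow> ('a \<Rightarrow> 'a) set" where
  "Inj_hom G P Q = {f. f \<in> extensional P \<and>
      f \<in> hom (G\<lparr>carrier := P\<rparr>) (G\<lparr>carrier := Q\<rparr>) \<and> inj_on f P}"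

definition fusion_system :: "nat \<Rightarrow> ('a, 'm) monoid_scheme \<Rightarrow> 'a fusion \<Rightarrow> bool" where
  "fusion_system p G F \<longleftrightarrow> p_group p G \<and>
    (\<forall>P Q. subgroup P G \<and> subgroup Q G \<longrightarrow>
        Hom_grp G P Q \<subseteq> F P Q \<and> F P Q \<subseteq> Inj_hom G P Q) \<and>
    (\<forall>P Q T f g. subgroup P G \<and> subgroup Q G \<and> subgroup T G \<and> f \<in> F P Q \<and> g \<in> F Q T
        \<longrightarrow> restrict (g \<circ> f) P \<in> F P T) \<and>
    (\<forall>P Q f. subgroup P G \<and> subgroup Q G \<and> f \<in> F P Q \<longrightarrow>
        f \<in> F P (f ` P) \<and> restrict (inv_into P f) (f ` P) \<in> F (f ` P) P)"

definition normalizer_in :: "('a, 'm) monoid_scheme \<Rightarrow> 'a set \<Rightarrow> 'a set" where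
  "normalizer_in G P = {g \<in> carrier G. (\<lambda>x. g \<otimes>\<^bsub>G\<^esub> x \<otimes>\<^bsub>G\<^esub> inv\<^bsub>G\<^esub> g) ` P = P}"

definition centralizer_in :: "('a, 'm) monoid_scheme \<Rightarrow> 'a set \<Rightarrow> 'a set" where
  "centralizer_in G P = {g \<in> carrier G. \<forall>x\<in>P. g \<otimes>\<^bsub>G\<^esub> x = x \<otimes>\<^bsub>G\<^esub> g}"

definition F_conj :: "'a fusion \<Rightarrow> 'a set \<Rightarrow> 'a set \<Rightarrow> bool" where
  "F_conj F P P' \<longleftrightarrow> (\<exists>f\<in>F P P'. f ` P = P')"

definition fully_normalized :: "('a, 'm) monoid_scheme \<Rightarrow> 'a fusion \<Rightarrow> 'a set \<Rightarrow> bool" where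
  "fully_normalized G F P \<longleftrightarrow> subgroup P G \<and>
     (\<forall>P'. subgroup P' G \<and> F_conj F P P' \<longrightarrow>
        card (normalizer_in G P') \<le> card (normalizer_in G P))"

definition fully_centralized :: "('a, 'm) monoid_scheme \<Rightarrow> 'a fusion \<Rightarrow> 'a set \<Rightarrow> bool" where
  "fully_centralized G F P \<longleftrightarrow> subgroup P G \<and>
     (\<forall>P'. subgroup P' G \<and> F_conj F P P' \<longrightarrow>
        card (centralizer_in G P') \<le> card (centralizer_in G P))"

definition Aut_grp :: "('a, 'm) monoid_scheme \<Rightarrow> 'a set \<Rightarrow> ('a \<Rightarrow> 'a) set" where
  "Aut_grp G P = {conj_map G g P | g. g \<in> normalizer_in G P}"

definition N_phi :: "('a, 'm) monoid_scheme \<Rightarrow> 'a set \<Rightarrow> ('a \<Rightarrow> 'a) \<Rightarrow> 'a set" where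
  "N_phi G P f = {g \<in> normalizer_in G P. \<exists>h \<in> normalizer_in G (f ` P).
      \<forall>x\<in>P. f (g \<otimes>\<^bsub>G\<^esub> x \<otimes>\<^bsub>G\<^esub> inv\<^bsub>G\<^esub> g) = h \<otimes>\<^bsub>G\<^esub> f x \<otimes>\<^bsub>G\<^esub> inv\<^bsub>G\<^esub> h}"

text \<open>Saturation (Broto-Levi-Oliver):
  (I) every fully normalized P is fully centralized and Aut_S(P) is a Sylow p-subgroup
      of Aut_F(P);
  (II) every phi \<in> Hom_F(P,S) with phi(P) fully centralized extends to some
      morphism in Hom_F(N_phi,S).\<close>
definition saturated :: "nat \<Rightarrow> ('a, 'm) monoid_scheme \<Rightarrow> 'a fusion \<Rightarrow> bool" where
  "saturated p G F \<longleftrightarrow> fusion_system p G F \<and>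
    (\<forall>P. fully_normalized G F P \<longrightarrow>
        fully_centralized G F P \<and>
        (\<exists>k. card (Aut_grp G P) = p ^ k) \<and>
        (\<exists>m. card (F P P) = card (Aut_grp G P) * m \<and> \<not> p dvd m)) \<and>
    (\<forall>P f. subgroup P G \<and> f \<in> F P (carrier G) \<and> fully_centralized G F (f ` P) \<longrightarrow>
        (\<exists>g \<in> F (N_phi G P f) (carrier G). \<forall>x\<in>P. g x = f x))"

definition prod_fusion :: "'a fusion \<Rightarrow> 'b fusion \<Rightarrow> ('a \<times> 'b) fusion" where
  "prod_fusion E F U V = {h. \<exists>\<psi>1 \<psi>2. \<psi>1 \<in> E (fst ` U) (fst ` V) \<and> \<psi>2 \<in> F (snd ` U) (snd ` V)
      \<and> h = (\<lambda>u\<in>U. (\<psi>1 (fst u), \<psi>2 (snd u))) \<and> h ` U \<subseteq> V}"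

definition induces_fusion_iso ::
  "('b, 'n) monoid_scheme \<Rightarrow> ('b \<Rightarrow> 'a) \<Rightarrow> 'b fusion \<Rightarrow> 'a fusion \<Rightarrow> bool" where
  "induces_fusion_iso S \<phi> F E \<longleftrightarrow>
    (\<forall>P1 P2. subgroup P1 S \<and> subgroup P2 S \<longrightarrow>
       E (\<phi> ` P1) (\<phi> ` P2) =
         (\<lambda>\<alpha>. \<lambda>x\<in>\<phi> ` P1. \<phi> (\<alpha> (inv_into (carrier S) \<phi> x))) ` F P1 P2)"

definition Delta :: "('b \<Rightarrow> 'a) \<Rightarrow> 'b set \<Rightarrow> ('a \<times> 'b) set" where
  "Delta \<phi> Q = {(\<phi> y, y) | y. y \<in> Q}"

end

theory Submission
  imports Defs
begin

lemma (in group) inv_mult_cancel1 [simp]: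
  "x \<in> carrier G \<Longrightarrow> y \<in> carrier G \<Longrightarrow> inv x \<otimes> (x \<otimes> y) = y"
  by (simp add: m_assoc[symmetric])
lemma (in group) inv_mult_cancel2 [simp]:
  "x \<in> carrier G \<Longrightarrow> y \<in> carrier G \<Longrightarrow> x \<otimes> (inv x \<otimes> y) = y"
  by (simp add: m_assoc[symmetric])
lemma (in group) conj_eq_comm:
  assumes "a \<in> carrier G" "r \<in> carrier G" "g \<in> carrier G"
    and e: "r \<otimes> a \<otimes> inv r = g \<otimes> a \<otimes> inv g"
  shows "(inv g \<otimes> r) \<otimes> a = a \<otimes> (inv g \<otimes> r)"
proof -
  have 1: "inv g \<otimes> (r \<otimes> a \<otimes> inv r) \<otimes> r = inv g \<otimes> r \<otimes> a"
    using assms(1-3) by (simp add: m_assoc)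
  have 2: "inv g \<otimes> (g \<otimes> a \<otimes> inv g) \<otimes> r = a \<otimes> (inv g \<otimes> r)"
    using assms(1-3) by (simp add: m_assoc)
  show ?thesis using 1 2 e by metis
qed
lemma (in group) conj_mult:
  assumes "a \<in> carrier G" "c \<in> carrier G" "d \<in> carrier G"
  shows "(c \<otimes> d) \<otimes> a \<otimes> inv (c \<otimes> d) = c \<otimes> (d \<otimes> a \<otimes> inv d) \<otimes> inv c"
  using assms by (simp add: m_assoc inv_mult_group)

lemma dirprod_conj:
  assumes "group R" "group S" "r \<in> carrier R" "s \<in> carrier S" "x \<in> carrier R \<times> carrier S"
  shows "(r, s) \<otimes>\<^bsub>R \<times>\<times> S\<^esub> x \<otimes>\<^bsub>R \<times>\<times> S\<^esub> inv\<^bsub>R \<times>\<times> S\<^esub> (r, s)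
     = (r \<otimes>\<^bsub>R\<^esub> fst x \<otimes>\<^bsub>R\<^esub> inv\<^bsub>R\<^esub> r, s \<otimes>\<^bsub>S\<^esub> snd x \<otimes>\<^bsub>S\<^esub> inv\<^bsub>S\<^esub> s)"
  using assms by (cases x) simp


locale iso2 = R: group R + S: group S for R :: "('a, 'm) monoid_scheme" and S :: "('b, 'n) monoid_scheme" +
  fixes \<phi> :: "'b \<Rightarrow> 'a"
  assumes iso: "\<phi> \<in> iso S R"
begin

lemma hom: "\<phi> \<in> hom S R" using iso by (simp add: iso_def)
lemma bij: "bij_betw \<phi> (carrier S) (carrier R)" using iso by (simp add: iso_def)
lemma inj: "inj_on \<phi> (carrier S)" using bij by (simp add: bij_betw_def)
lemma surj: "\<phi> ` carrier S = carrier R" using bij by (simp add: bij_betw_def)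
lemma gh: "group_hom S R \<phi>" using hom by (simp add: group_hom_axioms_def group_hom_def R.group_axioms S.group_axioms)
lemma closed: "x \<in> carrier S \<Longrightarrow> \<phi> x \<in> carrier R" using hom by (auto simp: hom_def)
lemma pmult: "x \<in> carrier S \<Longrightarrow> y \<in> carrier S \<Longrightarrow> \<phi> (x \<otimes>\<^bsub>S\<^esub> y) = \<phi> x \<otimes>\<^bsub>R\<^esub> \<phi> y"
  using hom by (auto simp: hom_def)
lemma pinv: "x \<in> carrier S \<Longrightarrow> \<phi> (inv\<^bsub>S\<^esub> x) = inv\<^bsub>R\<^esub> \<phi> x"
  by (rule group_hom.hom_inv[OF gh])
lemma pconj: "g \<in> carrier S \<Longrightarrow> x \<in> carrier S \<Longrightarrow>
   \<phi> (g \<otimes>\<^bsub>S\<^esub> x \<otimes>\<^bsub>S\<^esub> inv\<^bsub>S\<^esub> g) = \<phi> g \<otimes>\<^bsub>R\<^esub> \<phi> x \<otimes>\<^bsub>R\<^esub> inv\<^bsub>R\<^esub> \<phi> g"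
  by (simp add: pmult pinv)

lemma img_eq: "A \<subseteq> carrier S \<Longrightarrow> B \<subseteq> carrier S \<Longrightarrow> \<phi> ` A = \<phi> ` B \<longleftrightarrow> A = B"
  using inj by (simp add: inj_on_image_eq_iff)

lemma norm_transfer:
  assumes Z: "Z \<subseteq> carrier S"
  shows "normalizer_in R (\<phi> ` Z) = \<phi> ` normalizer_in S Z"
proof -
  have key: "(\<lambda>x. \<phi> g \<otimes>\<^bsub>R\<^esub> x \<otimes>\<^bsub>R\<^esub> inv\<^bsub>R\<^esub> \<phi> g) ` (\<phi> ` Z) = \<phi> ` ((\<lambda>x. g \<otimes>\<^bsub>S\<^esub> x \<otimes>\<^bsub>S\<^esub> inv\<^bsub>S\<^esub> g) ` Z)"
    if g: "g \<in> carrier S" for g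
  proof -
    have "(\<lambda>x. \<phi> g \<otimes>\<^bsub>R\<^esub> x \<otimes>\<^bsub>R\<^esub> inv\<^bsub>R\<^esub> \<phi> g) ` (\<phi> ` Z) = (\<lambda>z. \<phi> g \<otimes>\<^bsub>R\<^esub> \<phi> z \<otimes>\<^bsub>R\<^esub> inv\<^bsub>R\<^esub> \<phi> g) ` Z"
      by (simp only: image_image)
    also have "\<dots> = (\<lambda>z. \<phi> (g \<otimes>\<^bsub>S\<^esub> z \<otimes>\<^bsub>S\<^esub> inv\<^bsub>S\<^esub> g)) ` Z"
      by (rule image_cong[OF refl]) (use Z g in \<open>simp add: pconj subset_iff\<close>)
    also have "\<dots> = \<phi> ` ((\<lambda>x. g \<otimes>\<^bsub>S\<^esub> x \<otimes>\<^bsub>S\<^esub> inv\<^bsub>S\<^esub> g) ` Z)"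
      by (simp only: image_image)
    finally show ?thesis .
  qed
  have sub: "(\<lambda>x. g \<otimes>\<^bsub>S\<^esub> x \<otimes>\<^bsub>S\<^esub> inv\<^bsub>S\<^esub> g) ` Z \<subseteq> carrier S" if g: "g \<in> carrier S" for g
    using Z g by auto
  show ?thesis
  proof
    show "normalizer_in R (\<phi> ` Z) \<subseteq> \<phi> ` normalizer_in S Z"
    proof
      fix r assume r: "r \<in> normalizer_in R (\<phi> ` Z)"
      then have "r \<in> carrier R" by (simp add: normalizer_in_def)
      then obtain g where g: "g \<in> carrier S" "r = \<phi> g" using surj by blast
      have "\<phi> ` ((\<lambda>x. g \<otimes>\<^bsub>S\<^esub> x \<otimes>\<^bsub>S\<^esub> inv\<^bsub>S\<^esub> g) ` Z) = \<phi> ` Z"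
        using r g key by (simp add: normalizer_in_def)
      then have "(\<lambda>x. g \<otimes>\<^bsub>S\<^esub> x \<otimes>\<^bsub>S\<^esub> inv\<^bsub>S\<^esub> g) ` Z = Z"
        using img_eq sub[OF g(1)] Z by blast
      then have "g \<in> normalizer_in S Z" using g(1) by (simp add: normalizer_in_def)
      then show "r \<in> \<phi> ` normalizer_in S Z" using g(2) by blast
    qed
    show "\<phi> ` normalizer_in S Z \<subseteq> normalizer_in R (\<phi> ` Z)"
    proof
      fix r assume "r \<in> \<phi> ` normalizer_in S Z"
      then obtain g where g: "g \<in> normalizer_in S Z" "r = \<phi> g" by blast
      then have gc: "g \<in> carrier S" by (simp add: normalizer_in_def)
      have "(\<lambda>x. r \<otimes>\<^bsub>R\<^esub> x \<otimes>\<^bsub>R\<^esub> inv\<^bsub>R\<^esub> r) ` (\<phi> ` Z) = \<phi> ` Z"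
        using key[OF gc] g by (simp add: normalizer_in_def)
      then show "r \<in> normalizer_in R (\<phi> ` Z)" using g gc closed by (simp add: normalizer_in_def)
    qed
  qed
qed

lemma cent_transfer:
  assumes Z: "Z \<subseteq> carrier S"
  shows "centralizer_in R (\<phi> ` Z) = \<phi> ` centralizer_in S Z"
proof
  show "centralizer_in R (\<phi> ` Z) \<subseteq> \<phi> ` centralizer_in S Z"
  proof
    fix r assume r: "r \<in> centralizer_in R (\<phi> ` Z)"
    then have "r \<in> carrier R" by (simp add: centralizer_in_def)
    then obtain g where g: "g \<in> carrier S" "r = \<phi> g" using surj by blast
    have "g \<otimes>\<^bsub>S\<^esub> x = x \<otimes>\<^bsub>S\<^esub> g" if x: "x \<in> Z" for x
    proof -
      have "x \<in> carrier S" using x Z by blast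
      moreover have "\<phi> (g \<otimes>\<^bsub>S\<^esub> x) = \<phi> (x \<otimes>\<^bsub>S\<^esub> g)"
        using r g x \<open>x \<in> carrier S\<close> by (auto simp: centralizer_in_def pmult)
      ultimately show ?thesis using inj g inj_onD by fastforce
    qed
    then have "g \<in> centralizer_in S Z" using g(1) by (simp add: centralizer_in_def)
    then show "r \<in> \<phi> ` centralizer_in S Z" using g(2) by blast
  qed
  show "\<phi> ` centralizer_in S Z \<subseteq> centralizer_in R (\<phi> ` Z)"
  proof
    fix r assume "r \<in> \<phi> ` centralizer_in S Z"
    then obtain g where g: "g \<in> centralizer_in S Z" "r = \<phi> g" by blast
    then have gc: "g \<in> carrier S" by (simp add: centralizer_in_def)
    have "r \<otimes>\<^bsub>R\<^esub> x = x \<otimes>\<^bsub>R\<^esub> r" if x: "x \<in> \<phi> ` Z" for x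
    proof -
      obtain z where z: "z \<in> Z" "x = \<phi> z" using x by blast
      have zc: "z \<in> carrier S" using z Z by blast
      have "g \<otimes>\<^bsub>S\<^esub> z = z \<otimes>\<^bsub>S\<^esub> g" using g(1) z(1) by (simp add: centralizer_in_def)
      then have "\<phi> (g \<otimes>\<^bsub>S\<^esub> z) = \<phi> (z \<otimes>\<^bsub>S\<^esub> g)" by simp
      then show ?thesis using gc zc z(2) g(2) by (simp only: pmult)
    qed
    then show "r \<in> centralizer_in R (\<phi> ` Z)" using gc g(2) closed by (simp add: centralizer_in_def)
  qed
qed

lemma card_norm: "Z \<subseteq> carrier S \<Longrightarrow> card (normalizer_in R (\<phi> ` Z)) = card (normalizer_in S Z)"
proof -
  assume Z: "Z \<subseteq> carrier S"
  have "normalizer_in S Z \<subseteq> carrier S" by (auto simp: normalizer_in_def)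
  then have "inj_on \<phi> (normalizer_in S Z)" using inj_on_subset[OF inj] by blast
  then show ?thesis using norm_transfer[OF Z] card_image by metis
qed
lemma card_cent: "Z \<subseteq> carrier S \<Longrightarrow> card (centralizer_in R (\<phi> ` Z)) = card (centralizer_in S Z)"
proof -
  assume Z: "Z \<subseteq> carrier S"
  have "centralizer_in S Z \<subseteq> carrier S" by (auto simp: centralizer_in_def)
  then have "inj_on \<phi> (centralizer_in S Z)" using inj_on_subset[OF inj] by blast
  then show ?thesis using cent_transfer[OF Z] card_image by metis
qed

end


lemma upper_bound:
  assumes gR: "group R" and gS: "group S"
    and fR: "finite (carrier R)" and fS: "finite (carrier S)"
    and P: "subgroup P (R \<times>\<times> S)"
    and graph: "\<And>x x'. x \<in> P \<Longrightarrow> x' \<in> P \<Longrightarrow> snd x = snd x' \<Longrightarrow> x = x'"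
  shows "card (normalizer_in (R \<times>\<times> S) P)
     \<le> card (centralizer_in R (fst ` P)) * card (normalizer_in S (snd ` P))"
proof -
  interpret R: group R by fact
  interpret S: group S by fact
  define N where "N = normalizer_in (R \<times>\<times> S) P"
  have Pc: "P \<subseteq> carrier R \<times> carrier S" using P subgroup.subset by fastforce
  have Nc: "r \<in> carrier R \<and> s \<in> carrier S" if "(r, s) \<in> N" for r s
    using that unfolding N_def normalizer_in_def by (simp del: inv_DirProd)
  have Neq: "(\<lambda>x. (r, s) \<otimes>\<^bsub>R \<times>\<times> S\<^esub> x \<otimes>\<^bsub>R \<times>\<times> S\<^esub> inv\<^bsub>R \<times>\<times> S\<^esub> (r, s)) ` P = P"
    if "(r, s) \<in> N" for r s
    using that unfolding N_def normalizer_in_def by (simp del: inv_DirProd)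
  have Neq2: "(\<lambda>x. (r \<otimes>\<^bsub>R\<^esub> fst x \<otimes>\<^bsub>R\<^esub> inv\<^bsub>R\<^esub> r, s \<otimes>\<^bsub>S\<^esub> snd x \<otimes>\<^bsub>S\<^esub> inv\<^bsub>S\<^esub> s)) ` P = P"
    if "(r, s) \<in> N" for r s
  proof -
    have "(\<lambda>x. (r, s) \<otimes>\<^bsub>R \<times>\<times> S\<^esub> x \<otimes>\<^bsub>R \<times>\<times> S\<^esub> inv\<^bsub>R \<times>\<times> S\<^esub> (r, s)) ` P
       = (\<lambda>x. (r \<otimes>\<^bsub>R\<^esub> fst x \<otimes>\<^bsub>R\<^esub> inv\<^bsub>R\<^esub> r, s \<otimes>\<^bsub>S\<^esub> snd x \<otimes>\<^bsub>S\<^esub> inv\<^bsub>S\<^esub> s)) ` P"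
      apply (rule image_cong[OF refl])
      apply (rule dirprod_conj[OF gR gS])
      using Nc[OF that] Pc by auto
    then show ?thesis using Neq[OF that] by simp
  qed
  define gs where "gs s = (SOME r. (r, s) \<in> N)" for s
  have gsN: "(gs s, s) \<in> N" if "(r, s) \<in> N" for r s
    unfolding gs_def using that by (rule someI)
  define m where "m x = (inv\<^bsub>R\<^esub> gs (snd x) \<otimes>\<^bsub>R\<^esub> fst x, snd x)" for x
  have inj: "inj_on m N"
  proof (rule inj_onI)
    fix x y assume x: "x \<in> N" and y: "y \<in> N" and e: "m x = m y"
    obtain r s where xs: "x = (r, s)" by fastforce
    obtain r' s' where ys: "y = (r', s')" by fastforce
    have ss: "s = s'" using e by (simp add: m_def xs ys)
    have "gs s \<in> carrier R" using gsN[of r s] x xs Nc by blast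
    moreover have "inv\<^bsub>R\<^esub> gs s \<otimes>\<^bsub>R\<^esub> r = inv\<^bsub>R\<^esub> gs s \<otimes>\<^bsub>R\<^esub> r'"
      using e by (simp add: m_def xs ys ss)
    ultimately have "r = r'" using Nc x y xs ys by simp
    then show "x = y" using xs ys ss by simp
  qed
  have img: "m ` N \<subseteq> centralizer_in R (fst ` P) \<times> normalizer_in S (snd ` P)"
  proof
    fix z assume "z \<in> m ` N"
    then obtain r s where rs: "(r, s) \<in> N" "z = m (r, s)" by force
    have r: "r \<in> carrier R" and s: "s \<in> carrier S" using Nc[OF rs(1)] by auto
    have gN: "(gs s, s) \<in> N" using gsN rs(1) by blast
    have g: "gs s \<in> carrier R" using Nc[OF gN] by auto
    have "inv\<^bsub>R\<^esub> gs s \<otimes>\<^bsub>R\<^esub> r \<otimes>\<^bsub>R\<^esub> a = a \<otimes>\<^bsub>R\<^esub> (inv\<^bsub>R\<^esub> gs s \<otimes>\<^bsub>R\<^esub> r)"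
      if a: "a \<in> fst ` P" for a
    proof -
      obtain b where ab: "(a, b) \<in> P" using a by force
      have ac: "a \<in> carrier R" using ab Pc by auto
      have 1: "(r \<otimes>\<^bsub>R\<^esub> a \<otimes>\<^bsub>R\<^esub> inv\<^bsub>R\<^esub> r, s \<otimes>\<^bsub>S\<^esub> b \<otimes>\<^bsub>S\<^esub> inv\<^bsub>S\<^esub> s) \<in> P"
        using imageI[OF ab, of "\<lambda>x. (r \<otimes>\<^bsub>R\<^esub> fst x \<otimes>\<^bsub>R\<^esub> inv\<^bsub>R\<^esub> r, s \<otimes>\<^bsub>S\<^esub> snd x \<otimes>\<^bsub>S\<^esub> inv\<^bsub>S\<^esub> s)"] Neq2[OF rs(1)] by simp
      have 2: "(gs s \<otimes>\<^bsub>R\<^esub> a \<otimes>\<^bsub>R\<^esub> inv\<^bsub>R\<^esub> gs s, s \<otimes>\<^bsub>S\<^esub> b \<otimes>\<^bsub>S\<^esub> inv\<^bsub>S\<^esub> s) \<in> P"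
        using imageI[OF ab, of "\<lambda>x. (gs s \<otimes>\<^bsub>R\<^esub> fst x \<otimes>\<^bsub>R\<^esub> inv\<^bsub>R\<^esub> gs s, s \<otimes>\<^bsub>S\<^esub> snd x \<otimes>\<^bsub>S\<^esub> inv\<^bsub>S\<^esub> s)"] Neq2[OF gN] by simp
      have "r \<otimes>\<^bsub>R\<^esub> a \<otimes>\<^bsub>R\<^esub> inv\<^bsub>R\<^esub> r = gs s \<otimes>\<^bsub>R\<^esub> a \<otimes>\<^bsub>R\<^esub> inv\<^bsub>R\<^esub> gs s"
        using graph[OF 1 2] by simp
      then show ?thesis using R.conj_eq_comm ac r g by blast
    qed
    then have c: "inv\<^bsub>R\<^esub> gs s \<otimes>\<^bsub>R\<^esub> r \<in> centralizer_in R (fst ` P)"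
      using r g by (simp add: centralizer_in_def)
    have "snd ` ((\<lambda>x. (r \<otimes>\<^bsub>R\<^esub> fst x \<otimes>\<^bsub>R\<^esub> inv\<^bsub>R\<^esub> r, s \<otimes>\<^bsub>S\<^esub> snd x \<otimes>\<^bsub>S\<^esub> inv\<^bsub>S\<^esub> s)) ` P)
      = (\<lambda>b. s \<otimes>\<^bsub>S\<^esub> b \<otimes>\<^bsub>S\<^esub> inv\<^bsub>S\<^esub> s) ` (snd ` P)"
      by (simp add: image_image)
    then have "(\<lambda>b. s \<otimes>\<^bsub>S\<^esub> b \<otimes>\<^bsub>S\<^esub> inv\<^bsub>S\<^esub> s) ` (snd ` P) = snd ` P"
      using Neq2[OF rs(1)] by simp
    then have "s \<in> normalizer_in S (snd ` P)" using s by (simp add: normalizer_in_def)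
    then show "z \<in> centralizer_in R (fst ` P) \<times> normalizer_in S (snd ` P)"
      using c rs(2) by (simp add: m_def)
  qed
  have fin: "finite (centralizer_in R (fst ` P) \<times> normalizer_in S (snd ` P))"
    using fR fS by (auto simp: centralizer_in_def normalizer_in_def)
  have "card N = card (m ` N)" using inj by (simp add: card_image)
  also have "\<dots> \<le> card (centralizer_in R (fst ` P) \<times> normalizer_in S (snd ` P))"
    by (rule card_mono[OF fin img])
  also have "\<dots> = card (centralizer_in R (fst ` P)) * card (normalizer_in S (snd ` P))"
    by (simp add: card_cartesian_product)
  finally show ?thesis by (simp add: N_def)
qed



lemma proj_subgroup:
  assumes gR: "group R" and gS: "group S" and P: "subgroup P (R \<times>\<times> S)"
  shows "subgroup (fst ` P) R" "subgroup (snd ` P) S"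
proof -
  interpret R: group R by fact
  interpret S: group S by fact
  have Pc: "P \<subseteq> carrier R \<times> carrier S" using P subgroup.subset by fastforce
  have mc: "x \<otimes>\<^bsub>R \<times>\<times> S\<^esub> y \<in> P" if "x \<in> P" "y \<in> P" for x y
    using P that by (simp add: subgroup.m_closed)
  have oc: "(\<one>\<^bsub>R\<^esub>, \<one>\<^bsub>S\<^esub>) \<in> P" using subgroup.one_closed[OF P] by simp
  have ic: "(inv\<^bsub>R\<^esub> fst x, inv\<^bsub>S\<^esub> snd x) \<in> P" if x: "x \<in> P" for x
  proof -
    have "inv\<^bsub>R \<times>\<times> S\<^esub> x \<in> P" using P x by (simp add: subgroup.m_inv_closed)
    moreover have "inv\<^bsub>R \<times>\<times> S\<^esub> x = (inv\<^bsub>R\<^esub> fst x, inv\<^bsub>S\<^esub> snd x)"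
      using x Pc inv_DirProd[OF gR gS, of "fst x" "snd x"] by (cases x) auto
    ultimately show ?thesis by simp
  qed
  show "subgroup (fst ` P) R"
  proof
    show "fst ` P \<subseteq> carrier R" using Pc by auto
    show "\<one>\<^bsub>R\<^esub> \<in> fst ` P" using oc by force
    fix a b assume a: "a \<in> fst ` P" and b: "b \<in> fst ` P"
    then obtain x y where xy: "x \<in> P" "y \<in> P" "a = fst x" "b = fst y" by blast
    have "fst (x \<otimes>\<^bsub>R \<times>\<times> S\<^esub> y) = a \<otimes>\<^bsub>R\<^esub> b" using xy by (simp add: mult_DirProd')
    then show "a \<otimes>\<^bsub>R\<^esub> b \<in> fst ` P" using mc[OF xy(1,2)] by force
    show "inv\<^bsub>R\<^esub> a \<in> fst ` P" using ic[OF xy(1)] xy(3) by force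
  qed
  show "subgroup (snd ` P) S"
  proof
    show "snd ` P \<subseteq> carrier S" using Pc by auto
    show "\<one>\<^bsub>S\<^esub> \<in> snd ` P" using oc by force
    fix a b assume a: "a \<in> snd ` P" and b: "b \<in> snd ` P"
    then obtain x y where xy: "x \<in> P" "y \<in> P" "a = snd x" "b = snd y" by blast
    have "snd (x \<otimes>\<^bsub>R \<times>\<times> S\<^esub> y) = a \<otimes>\<^bsub>S\<^esub> b" using xy by (simp add: mult_DirProd')
    then show "a \<otimes>\<^bsub>S\<^esub> b \<in> snd ` P" using mc[OF xy(1,2)] by force
    show "inv\<^bsub>S\<^esub> a \<in> snd ` P" using ic[OF xy(1)] xy(3) by force
  qed
qed

lemma Delta_img: "Delta \<phi> Q = (\<lambda>y. (\<phi> y, y)) ` Q"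
  by (auto simp: Delta_def)

context iso2
begin

lemma Delta_subgroup:
  assumes Q: "subgroup Q S"
  shows "subgroup (Delta \<phi> Q) (R \<times>\<times> S)"
proof -
  have Qc: "Q \<subseteq> carrier S" using Q subgroup.subset by fastforce
  show ?thesis
  proof
    show "Delta \<phi> Q \<subseteq> carrier (R \<times>\<times> S)" using Qc closed by (auto simp: Delta_def)
    have "\<phi> \<one>\<^bsub>S\<^esub> = \<one>\<^bsub>R\<^esub>" by (rule group_hom.hom_one[OF gh])
    then show "\<one>\<^bsub>R \<times>\<times> S\<^esub> \<in> Delta \<phi> Q" using subgroup.one_closed[OF Q]
      by (auto simp: Delta_def intro!: exI[of _ "\<one>\<^bsub>S\<^esub>"])
    fix x y assume x: "x \<in> Delta \<phi> Q" and y: "y \<in> Delta \<phi> Q"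
    then obtain a b where ab: "a \<in> Q" "b \<in> Q" "x = (\<phi> a, a)" "y = (\<phi> b, b)"
      by (auto simp: Delta_def)
    have ac: "a \<in> carrier S" "b \<in> carrier S" using ab Qc by auto
    have "x \<otimes>\<^bsub>R \<times>\<times> S\<^esub> y = (\<phi> (a \<otimes>\<^bsub>S\<^esub> b), a \<otimes>\<^bsub>S\<^esub> b)"
      using ab ac by (simp add: pmult)
    then show "x \<otimes>\<^bsub>R \<times>\<times> S\<^esub> y \<in> Delta \<phi> Q"
      using subgroup.m_closed[OF Q ab(1,2)] by (auto simp: Delta_def)
    have "inv\<^bsub>R \<times>\<times> S\<^esub> x = (\<phi> (inv\<^bsub>S\<^esub> a), inv\<^bsub>S\<^esub> a)"
      using ab ac closed inv_DirProd[OF R.group_axioms S.group_axioms] by (simp add: pinv)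
    then show "inv\<^bsub>R \<times>\<times> S\<^esub> x \<in> Delta \<phi> Q"
      using subgroup.m_inv_closed[OF Q ab(1)] by (auto simp: Delta_def)
  qed
qed

lemma lower_bound:
  assumes Q: "subgroup Q S" and fR: "finite (carrier R)" and fS: "finite (carrier S)"
  shows "card (centralizer_in R (\<phi> ` Q)) * card (normalizer_in S Q)
     \<le> card (normalizer_in (R \<times>\<times> S) (Delta \<phi> Q))"
proof -
  have Qc: "Q \<subseteq> carrier S" using Q subgroup.subset by fastforce
  define m where "m x = (fst x \<otimes>\<^bsub>R\<^esub> \<phi> (snd x), snd x)" for x
  let ?C = "centralizer_in R (\<phi> ` Q)" and ?N = "normalizer_in S Q"
  have inj: "inj_on m (?C \<times> ?N)"
  proof (rule inj_onI)
    fix x y assume x: "x \<in> ?C \<times> ?N" and y: "y \<in> ?C \<times> ?N" and e: "m x = m y"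
    have ss: "snd x = snd y" using e by (simp add: m_def)
    have c: "fst x \<in> carrier R" "fst y \<in> carrier R" "snd x \<in> carrier S"
      using x y by (auto simp: centralizer_in_def normalizer_in_def)
    have "fst x \<otimes>\<^bsub>R\<^esub> \<phi> (snd x) = fst y \<otimes>\<^bsub>R\<^esub> \<phi> (snd x)" using e ss by (simp add: m_def)
    then have "fst x = fst y" using c closed[OF c(3)] by simp
    then show "x = y" using ss by (simp add: prod_eq_iff)
  qed
  have img: "m ` (?C \<times> ?N) \<subseteq> normalizer_in (R \<times>\<times> S) (Delta \<phi> Q)"
  proof
    fix z assume "z \<in> m ` (?C \<times> ?N)"
    then obtain c s where cs: "c \<in> ?C" "s \<in> ?N" "z = (c \<otimes>\<^bsub>R\<^esub> \<phi> s, s)"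
      by (auto simp: m_def)
    have c: "c \<in> carrier R" and s: "s \<in> carrier S"
      using cs by (auto simp: centralizer_in_def normalizer_in_def)
    have ccomm: "c \<otimes>\<^bsub>R\<^esub> \<phi> y = \<phi> y \<otimes>\<^bsub>R\<^esub> c" if "y \<in> Q" for y
      using cs(1) that by (auto simp: centralizer_in_def)
    have sQ: "(\<lambda>x. s \<otimes>\<^bsub>S\<^esub> x \<otimes>\<^bsub>S\<^esub> inv\<^bsub>S\<^esub> s) ` Q = Q"
      using cs(2) by (simp add: normalizer_in_def)
    have zc: "z \<in> carrier (R \<times>\<times> S)" using cs(3) c s closed by simp
    have pt: "z \<otimes>\<^bsub>R \<times>\<times> S\<^esub> (\<phi> y, y) \<otimes>\<^bsub>R \<times>\<times> S\<^esub> inv\<^bsub>R \<times>\<times> S\<^esub> z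
        = (\<phi> (s \<otimes>\<^bsub>S\<^esub> y \<otimes>\<^bsub>S\<^esub> inv\<^bsub>S\<^esub> s), s \<otimes>\<^bsub>S\<^esub> y \<otimes>\<^bsub>S\<^esub> inv\<^bsub>S\<^esub> s)"
      if y: "y \<in> Q" for y
    proof -
      have yc: "y \<in> carrier S" using y Qc by auto
      let ?y' = "s \<otimes>\<^bsub>S\<^esub> y \<otimes>\<^bsub>S\<^esub> inv\<^bsub>S\<^esub> s"
      have y'Q: "?y' \<in> Q" using sQ y by blast
      have y'c: "?y' \<in> carrier S" using yc s by simp
      have "z \<otimes>\<^bsub>R \<times>\<times> S\<^esub> (\<phi> y, y) \<otimes>\<^bsub>R \<times>\<times> S\<^esub> inv\<^bsub>R \<times>\<times> S\<^esub> z
         = ((c \<otimes>\<^bsub>R\<^esub> \<phi> s) \<otimes>\<^bsub>R\<^esub> \<phi> y \<otimes>\<^bsub>R\<^esub> inv\<^bsub>R\<^esub> (c \<otimes>\<^bsub>R\<^esub> \<phi> s), ?y')"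
        using dirprod_conj[OF R.group_axioms S.group_axioms, of "c \<otimes>\<^bsub>R\<^esub> \<phi> s" s "(\<phi> y, y)"]
          cs(3) c s yc closed by simp
      also have "(c \<otimes>\<^bsub>R\<^esub> \<phi> s) \<otimes>\<^bsub>R\<^esub> \<phi> y \<otimes>\<^bsub>R\<^esub> inv\<^bsub>R\<^esub> (c \<otimes>\<^bsub>R\<^esub> \<phi> s)
          = c \<otimes>\<^bsub>R\<^esub> \<phi> ?y' \<otimes>\<^bsub>R\<^esub> inv\<^bsub>R\<^esub> c"
        using R.conj_mult[of "\<phi> y" c "\<phi> s"] c s yc closed pconj[OF s yc] by simp
      also have "\<dots> = \<phi> ?y' \<otimes>\<^bsub>R\<^esub> c \<otimes>\<^bsub>R\<^esub> inv\<^bsub>R\<^esub> c" using ccomm[OF y'Q] by simp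
      also have "\<dots> = \<phi> ?y'" using c closed[OF y'c] by (simp add: R.m_assoc)
      finally show ?thesis .
    qed
    have "(\<lambda>x. z \<otimes>\<^bsub>R \<times>\<times> S\<^esub> x \<otimes>\<^bsub>R \<times>\<times> S\<^esub> inv\<^bsub>R \<times>\<times> S\<^esub> z) ` Delta \<phi> Q
        = (\<lambda>y. z \<otimes>\<^bsub>R \<times>\<times> S\<^esub> (\<phi> y, y) \<otimes>\<^bsub>R \<times>\<times> S\<^esub> inv\<^bsub>R \<times>\<times> S\<^esub> z) ` Q"
      by (simp only: Delta_img image_image)
    also have "\<dots> = (\<lambda>y. (\<phi> y, y)) ` ((\<lambda>x. s \<otimes>\<^bsub>S\<^esub> x \<otimes>\<^bsub>S\<^esub> inv\<^bsub>S\<^esub> s) ` Q)"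
      unfolding image_image by (rule image_cong[OF refl]) (rule pt)
    also have "\<dots> = Delta \<phi> Q" by (simp only: sQ Delta_img)
    finally show "z \<in> normalizer_in (R \<times>\<times> S) (Delta \<phi> Q)"
      using zc by (simp add: normalizer_in_def)
  qed
  have fin: "finite (normalizer_in (R \<times>\<times> S) (Delta \<phi> Q))"
    by (rule finite_subset[of _ "carrier R \<times> carrier S"]) (auto simp: normalizer_in_def fR fS)
  have "card (?C \<times> ?N) \<le> card (normalizer_in (R \<times>\<times> S) (Delta \<phi> Q))"
    by (rule card_inj_on_le[OF inj img fin])
  then show ?thesis by (simp add: card_cartesian_product)
qed

lemma pullback:
  assumes fF: "fusion_system p S F"
    and ind: "induces_fusion_iso S \<phi> F E"
    and Q: "subgroup Q S" and A: "subgroup A R" and c: "F_conj E (\<phi> ` Q) A"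
  shows "\<exists>W. subgroup W S \<and> A = \<phi> ` W \<and> F_conj F Q W"
proof -
  have Qc: "Q \<subseteq> carrier S" using Q subgroup.subset by fastforce
  have Ac: "A \<subseteq> carrier R" using A subgroup.subset by fastforce
  define W where "W = {x \<in> carrier S. \<phi> x \<in> A}"
  have Wc: "W \<subseteq> carrier S" by (auto simp: W_def)
  have WA: "\<phi> ` W = A"
  proof
    show "\<phi> ` W \<subseteq> A" by (auto simp: W_def)
    show "A \<subseteq> \<phi> ` W"
    proof
      fix a assume a: "a \<in> A"
      then have "a \<in> \<phi> ` carrier S" using Ac surj by blast
      then obtain x where "x \<in> carrier S" "a = \<phi> x" by blast
      then show "a \<in> \<phi> ` W" using a by (auto simp: W_def)
    qed
  qed
  have W: "subgroup W S"
  proof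
    show "W \<subseteq> carrier S" by (rule Wc)
    have "\<phi> \<one>\<^bsub>S\<^esub> = \<one>\<^bsub>R\<^esub>" by (rule group_hom.hom_one[OF gh])
    then show "\<one>\<^bsub>S\<^esub> \<in> W" using subgroup.one_closed[OF A] by (simp add: W_def)
    fix x y assume x: "x \<in> W" and y: "y \<in> W"
    then show "x \<otimes>\<^bsub>S\<^esub> y \<in> W" using subgroup.m_closed[OF A] by (simp add: W_def pmult)
    show "inv\<^bsub>S\<^esub> x \<in> W" using x subgroup.m_inv_closed[OF A] by (simp add: W_def pinv)
  qed
  obtain f where f: "f \<in> E (\<phi> ` Q) A" "f ` (\<phi> ` Q) = A" using c by (auto simp: F_conj_def)
  have "E (\<phi> ` Q) (\<phi> ` W) = (\<lambda>\<alpha>. \<lambda>x\<in>\<phi> ` Q. \<phi> (\<alpha> (inv_into (carrier S) \<phi> x))) ` F Q W"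
    using ind Q W by (simp add: induces_fusion_iso_def)
  then obtain \<alpha> where al: "\<alpha> \<in> F Q W" "f = (\<lambda>x\<in>\<phi> ` Q. \<phi> (\<alpha> (inv_into (carrier S) \<phi> x)))"
    using f(1) WA by auto
  have "\<alpha> \<in> Inj_hom S Q W" using fF Q W al(1) by (auto simp: fusion_system_def)
  then have aW: "\<alpha> ` Q \<subseteq> W" by (auto simp: Inj_hom_def hom_def)
  have fy: "f (\<phi> y) = \<phi> (\<alpha> y)" if "y \<in> Q" for y
    using that Qc al(2) inv_into_f_f[OF inj] by auto
  have "A = (\<lambda>y. f (\<phi> y)) ` Q" using f(2) by (simp add: image_image)
  also have "\<dots> = \<phi> ` (\<alpha> ` Q)" using fy by (simp add: image_image)
  finally have "\<phi> ` (\<alpha> ` Q) = \<phi> ` W" using WA by simp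
  then have "\<alpha> ` Q = W" using img_eq aW Wc by blast
  then have "F_conj F Q W" using al(1) by (auto simp: F_conj_def)
  then show ?thesis using W WA by blast
qed

end


theorem lemma2p9:
  fixes p :: nat
    and R :: "('a, 'm) monoid_scheme" and S :: "('b, 'n) monoid_scheme"
    and E :: "'a fusion" and F :: "'b fusion"
    and \<phi> :: "'b \<Rightarrow> 'a" and Q :: "'b set"
  assumes "fusion_system p R E" and "fusion_system p S F"
    and "saturated p R E \<or> saturated p S F"
    and "\<phi> \<in> iso S R"
    and "induces_fusion_iso S \<phi> F E"
    and "fully_normalized S F Q"
  shows "fully_normalized (R \<times>\<times> S) (prod_fusion E F) (Delta \<phi> Q)"
proof -
  note fE = assms(1) and fF = assms(2) and sat = assms(3) and ind = assms(5) and fnQ = assms(6)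
  have gR: "group R" and fR: "finite (carrier R)" using fE by (auto simp: fusion_system_def p_group_def)
  have gS: "group S" and fS: "finite (carrier S)" using fF by (auto simp: fusion_system_def p_group_def)
  interpret iso2 R S \<phi>
    using gR gS assms(4) by (simp add: iso2_def iso2_axioms_def)
  have Q: "subgroup Q S" using fnQ by (simp add: fully_normalized_def)
  have Qc: "Q \<subseteq> carrier S" using Q subgroup.subset by fastforce
  have normQ: "card (normalizer_in S B) \<le> card (normalizer_in S Q)"
    if "subgroup B S" "F_conj F Q B" for B
    using fnQ that by (simp add: fully_normalized_def)
  have centQ: "card (centralizer_in R A) \<le> card (centralizer_in R (\<phi> ` Q))"
    if A: "subgroup A R" and c: "F_conj E (\<phi> ` Q) A" for A
  proof -
    obtain W where W: "subgroup W S" "A = \<phi> ` W" "F_conj F Q W"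
      using pullback[OF fF ind Q A c] by blast
    have Wc: "W \<subseteq> carrier S" using W(1) subgroup.subset by fastforce
    show ?thesis using sat
    proof
      assume sE: "saturated p R E"
      have PQ: "subgroup (\<phi> ` Q) R" by (rule group_hom.subgroup_img_is_subgroup[OF gh Q])
      have "fully_normalized R E (\<phi> ` Q)"
        unfolding fully_normalized_def
      proof (intro conjI allI impI)
        show "subgroup (\<phi> ` Q) R" by (rule PQ)
        fix P'' assume h: "subgroup P'' R \<and> F_conj E (\<phi> ` Q) P''"
        obtain V where V: "subgroup V S" "P'' = \<phi> ` V" "F_conj F Q V"
          using pullback[OF fF ind Q _ _] h by blast
        have Vc: "V \<subseteq> carrier S" using V(1) subgroup.subset by fastforce
        have "card (normalizer_in R P'') = card (normalizer_in S V)" using V(2) Vc card_norm by simp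
        also have "\<dots> \<le> card (normalizer_in S Q)" using normQ V by blast
        also have "\<dots> = card (normalizer_in R (\<phi> ` Q))" using card_norm[OF Qc] by simp
        finally show "card (normalizer_in R P'') \<le> card (normalizer_in R (\<phi> ` Q))" .
      qed
      then have "fully_centralized R E (\<phi> ` Q)" using sE by (simp add: saturated_def)
      then show ?thesis using A c by (simp add: fully_centralized_def)
    next
      assume sF: "saturated p S F"
      then have "fully_centralized S F Q" using fnQ by (simp add: saturated_def)
      then have "card (centralizer_in S W) \<le> card (centralizer_in S Q)"
        using W by (simp add: fully_centralized_def)
      then show ?thesis using W(2) card_cent[OF Wc] card_cent[OF Qc] by simp
    qed
  qed
  show ?thesis
    unfolding fully_normalized_def
  proof (intro conjI allI impI)
    show D: "subgroup (Delta \<phi> Q) (R \<times>\<times> S)" by (rule Delta_subgroup[OF Q])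
    fix P' assume h: "subgroup P' (R \<times>\<times> S) \<and> F_conj (prod_fusion E F) (Delta \<phi> Q) P'"
    then have P': "subgroup P' (R \<times>\<times> S)" by simp
    obtain hh where hh: "hh \<in> prod_fusion E F (Delta \<phi> Q) P'" "hh ` Delta \<phi> Q = P'"
      using h by (auto simp: F_conj_def)
    have fD: "fst ` Delta \<phi> Q = \<phi> ` Q" by (simp add: Delta_img image_image)
    have sD: "snd ` Delta \<phi> Q = Q" by (simp add: Delta_img image_image)
    obtain \<psi>1 \<psi>2 where ps: "\<psi>1 \<in> E (\<phi> ` Q) (fst ` P')" "\<psi>2 \<in> F Q (snd ` P')"
      "hh = (\<lambda>u\<in>Delta \<phi> Q. (\<psi>1 (fst u), \<psi>2 (snd u)))"
      using hh(1) fD sD by (auto simp: prod_fusion_def)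
    have P'eq: "P' = (\<lambda>y. (\<psi>1 (\<phi> y), \<psi>2 y)) ` Q"
    proof -
      have "P' = (\<lambda>y. hh (\<phi> y, y)) ` Q" using hh(2) by (simp add: Delta_img image_image)
      also have "\<dots> = (\<lambda>y. (\<psi>1 (\<phi> y), \<psi>2 y)) ` Q"
        by (rule image_cong[OF refl]) (simp add: ps(3) Delta_def)
      finally show ?thesis .
    qed
    have A: "subgroup (fst ` P') R" and B: "subgroup (snd ` P') S"
      using proj_subgroup[OF gR gS P'] by auto
    have fP: "fst ` P' = \<psi>1 ` (\<phi> ` Q)" using P'eq by (simp add: image_image)
    have sP: "snd ` P' = \<psi>2 ` Q" using P'eq by (simp add: image_image)
    have "\<psi>2 \<in> Inj_hom S Q (snd ` P')" using fF Q B ps(2) by (auto simp: fusion_system_def)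
    then have inj2: "inj_on \<psi>2 Q" by (simp add: Inj_hom_def)
    have graph: "x = x'" if xx: "x \<in> P'" "x' \<in> P'" "snd x = snd x'" for x x'
    proof -
      obtain y where y: "y \<in> Q" "x = (\<psi>1 (\<phi> y), \<psi>2 y)" using xx(1) P'eq by blast
      obtain y' where y': "y' \<in> Q" "x' = (\<psi>1 (\<phi> y'), \<psi>2 y')" using xx(2) P'eq by blast
      have "\<psi>2 y = \<psi>2 y'" using xx(3) y y' by simp
      then have "y = y'" using inj2 y(1) y'(1) by (simp add: inj_on_eq_iff)
      then show ?thesis using y y' by simp
    qed
    have cA: "F_conj E (\<phi> ` Q) (fst ` P')" using ps(1) fP by (auto simp: F_conj_def)
    have cB: "F_conj F Q (snd ` P')" using ps(2) sP by (auto simp: F_conj_def)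
    have "card (normalizer_in (R \<times>\<times> S) P')
        \<le> card (centralizer_in R (fst ` P')) * card (normalizer_in S (snd ` P'))"
      by (rule upper_bound[OF gR gS fR fS P' graph])
    also have "\<dots> \<le> card (centralizer_in R (\<phi> ` Q)) * card (normalizer_in S Q)"
      by (rule mult_le_mono[OF centQ[OF A cA] normQ[OF B cB]])
    also have "\<dots> \<le> card (normalizer_in (R \<times>\<times> S) (Delta \<phi> Q))"
      by (rule lower_bound[OF Q fR fS])
    finally show "card (normalizer_in (R \<times>\<times> S) P') \<le> card (normalizer_in (R \<times>\<times> S) (Delta \<phi> Q))" .
  qed
qed


end
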